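(* Let $G$ be a connected cubic (3-regular) graph of order $n$ that is not isomorphic to the Heawood graph. Then $\gamma^{0}_{st}(G)\ge -\frac{2n}{3}$.
   Context: For a vertex $v$ of a graph $G=(V,E)$, $N(v)$ is its open neighborhood, and for $f:V\to\mathbb{R}$ and $B\subseteq V$ write $f(B)=\sum_{v\in B}f(v)$; $f(V)$ is the weight of $f$. An inverse signed total dominating function (ISTDF) of $G$ is a function $f:V\to\{-1,1\}$ such that $f(N(v))\le 0$ for every $v\in V$. The inverse signed total domination number $\gamma^{0}_{st}(G)$ is the maximum weight of an ISTDF of $G$. The Heawood graph is the unique 3-regular graph of girth 6 on 14 vertices (the incidence graph of the Fano plane). *)

theory Defs
  imports Complex_Main
begin

definition simple_graph :: "'a set \<Rightarrow> ('a \<Rightarrow> 'a \<Rightarrow> bool) \<Rightarrow> bool" where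
  "simple_graph V E \<longleftrightarrow> finite V \<and> (\<forall>u v. E u v \<longrightarrow> u \<in> V \<and> v \<in> V)
     \<and> (\<forall>u v. E u v \<longrightarrow> E v u) \<and> (\<forall>v. \<not> E v v)"

definition nbhd :: "'a set \<Rightarrow> ('a \<Rightarrow> 'a \<Rightarrow> bool) \<Rightarrow> 'a \<Rightarrow> 'a set" where
  "nbhd V E v = {u \<in> V. E v u}"

definition cubic :: "'a set \<Rightarrow> ('a \<Rightarrow> 'a \<Rightarrow> bool) \<Rightarrow> bool" where
  "cubic V E \<longleftrightarrow> (\<forall>v \<in> V. card (nbhd V E v) = 3)"

definition connected_graph :: "'a set \<Rightarrow> ('a \<Rightarrow> 'a \<Rightarrow> bool) \<Rightarrow> bool" where
  "connected_graph V E \<longleftrightarrow> V \<noteq> {} \<and>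
     (\<forall>u \<in> V. \<forall>v \<in> V. (u, v) \<in> {(x, y). E x y}\<^sup>*)"

definition istdf :: "'a set \<Rightarrow> ('a \<Rightarrow> 'a \<Rightarrow> bool) \<Rightarrow> ('a \<Rightarrow> int) \<Rightarrow> bool" where
  "istdf V E f \<longleftrightarrow> (\<forall>v \<in> V. f v \<in> {-1, 1}) \<and> (\<forall>v \<in> V. sum f (nbhd V E v) \<le> 0)"

definition inv_signed_total_dom_num :: "'a set \<Rightarrow> ('a \<Rightarrow> 'a \<Rightarrow> bool) \<Rightarrow> int" where
  "inv_signed_total_dom_num V E = Max {sum f V | f. istdf V E f}"

text \<open>Heawood graph: incidence graph of the Fano plane. Vertices 0..6 are the points
of Z/7, vertices 7..13 are the lines L_j = {j, j+1, j+3} (mod 7), j = 0..6.\<close>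
definition fano_inc :: "nat \<Rightarrow> nat \<Rightarrow> bool" where
  "fano_inc p j \<longleftrightarrow> p < 7 \<and> j < 7 \<and> (p + 7 - j) mod 7 \<in> {0, 1, 3}"

definition heawood_adj :: "nat \<Rightarrow> nat \<Rightarrow> bool" where
  "heawood_adj a b \<longleftrightarrow> a < 14 \<and> b < 14 \<and>
     ((a < 7 \<and> 7 \<le> b \<and> fano_inc a (b - 7)) \<or> (b < 7 \<and> 7 \<le> a \<and> fano_inc b (a - 7)))"

definition iso_heawood :: "'a set \<Rightarrow> ('a \<Rightarrow> 'a \<Rightarrow> bool) \<Rightarrow> bool" where
  "iso_heawood V E \<longleftrightarrow> (\<exists>h. bij_betw h V {0..<14} \<and>
     (\<forall>u \<in> V. \<forall>v \<in> V. E u v \<longleftrightarrow> heawood_adj (h u) (h v)))"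

end

theory Submission
  imports Defs
begin


locale agraph =
  fixes W :: "'a set" and R :: "'a \<Rightarrow> 'a \<Rightarrow> bool"
  assumes fin: "finite W"
    and sym: "\<And>u v. R u v \<Longrightarrow> R v u"
    and irr: "\<And>u. \<not> R u u"
    and deg: "\<And>u. u \<in> W \<Longrightarrow> card {v\<in>W. R u v} \<le> 6"
    and tri: "\<And>u v. u \<in> W \<Longrightarrow> v \<in> W \<Longrightarrow> R u v \<Longrightarrow> \<exists>t\<in>W. R u t \<and> R v t"
    and conn: "\<And>u v. u \<in> W \<Longrightarrow> v \<in> W \<Longrightarrow> (u,v) \<in> {(x,y). x\<in>W \<and> y\<in>W \<and> R x y}\<^sup>*"
begin

definition nb where "nb u = {v\<in>W. R u v}"
definition cn where "cn I = {v\<in>W. v \<in> I \<or> (\<exists>u\<in>I. R u v)}"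
definition indep where "indep I \<longleftrightarrow> (\<forall>u\<in>I. \<forall>v\<in>I. \<not> R u v)"
definition good where "good I \<longleftrightarrow> I \<subseteq> W \<and> indep I \<and> card W \<le> 6 * card I"

lemma nb_fin: "finite (nb u)" using fin by (simp add: nb_def)
lemma cn_fin: "finite (cn I)" using fin by (simp add: cn_def)
lemma nb_card: "u \<in> W \<Longrightarrow> card (nb u) \<le> 6" using deg by (simp add: nb_def)

lemma exit: assumes "S \<subseteq> W" "s0 \<in> S" "u \<in> W" "u \<notin> S" shows "\<exists>w\<in>W-S. \<exists>s\<in>S. R s w"
proof -
  have "(s0,u) \<in> {(x,y). x\<in>W \<and> y\<in>W \<and> R x y}\<^sup>*" using conn assms by blast
  then have "u \<in> S \<or> (\<exists>w\<in>W-S. \<exists>s\<in>S. R s w)"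
  proof (induction rule: rtrancl_induct)
    case base then show ?case using assms by simp
  next
    case (step y z) then show ?case by blast
  qed
  then show ?thesis using assms by blast
qed

lemma cn_insert: "w \<in> W \<Longrightarrow> cn (insert w I) = cn I \<union> insert w (nb w)"
  by (auto simp: cn_def nb_def)

lemma card_cn_insert: assumes "w \<in> W"
  shows "card (cn (insert w I)) \<le> card (cn I) + card (insert w (nb w) - cn I)"
proof -
  have "cn (insert w I) = cn I \<union> (insert w (nb w) - cn I)" using cn_insert[OF assms] by blast
  then show ?thesis by (metis card_Un_le)
qed

lemma cn_sub: "cn I \<subseteq> W" by (auto simp: cn_def)
lemma I_sub_cn: "I \<subseteq> W \<Longrightarrow> I \<subseteq> cn I" by (auto simp: cn_def)

lemma indep_insert: assumes "indep I" "w \<in> W" "w \<notin> cn I"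
  shows "indep (insert w I)"
  using assms irr sym unfolding indep_def cn_def by blast


lemma ext: assumes "J \<subseteq> W" "indep J" "J \<noteq> {}" "card (cn J) \<le> 6 * card J"
  shows "\<exists>I. good I"
proof -
  define P where "P = (\<lambda>I. I \<subseteq> W \<and> indep I \<and> I \<noteq> {} \<and> card (cn I) \<le> 6 * card I)"
  have PJ: "P J" using assms unfolding P_def by blast
  have bd: "\<forall>y. P y \<longrightarrow> card y < card W + 1"
    unfolding P_def using fin card_mono by (metis less_Suc_eq_le Suc_eq_plus1)
  obtain I where I: "P I" and mx: "\<forall>y. P y \<longrightarrow> card y \<le> card I"
    using Lattices_Big.ex_has_greatest_nat[of P J card "card W + 1", OF PJ bd] by blast
  have IW: "I \<subseteq> W" and Ii: "indep I" and Ine: "I \<noteq> {}" and Ic: "card (cn I) \<le> 6 * card I"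
    using I unfolding P_def by auto
  show ?thesis
  proof (cases "cn I = W")
    case True then show ?thesis using IW Ii Ic unfolding good_def by auto
  next
    case False
    then obtain u where u: "u \<in> W" "u \<notin> cn I" using cn_sub by blast
    obtain s0 where "s0 \<in> I" using Ine by blast
    then have "s0 \<in> cn I" using IW I_sub_cn by blast
    then obtain w s where w: "w \<in> W" "w \<notin> cn I" "s \<in> cn I" "R s w"
      using exit[OF cn_sub _ u] by blast
    have wI: "w \<notin> I" using w IW I_sub_cn by blast
    have "s \<in> W" using w(3) cn_sub by blast
    then have sn: "s \<in> nb w" using sym[OF w(4)] by (simp add: nb_def)
    then have "insert w (nb w) - cn I \<subseteq> insert w (nb w) - {s}" using w(3) by blast
    then have "card (insert w (nb w) - cn I) \<le> card (insert w (nb w) - {s})"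
      by (meson card_mono finite_Diff finite_insert nb_fin)
    also have "\<dots> = card (insert w (nb w)) - 1" using sn nb_fin by simp
    also have "\<dots> \<le> 6" using nb_card[OF w(1)] nb_fin by (auto simp: card_insert_if)
    finally have c6: "card (insert w (nb w) - cn I) \<le> 6" .
    have fI: "finite I" using IW finite_subset[OF _ fin] by blast
    have cI: "card (insert w I) = card I + 1" using wI fI by simp
    have i2: "indep (insert w I)" using indep_insert[OF Ii w(1,2)] .
    have i3: "card (cn (insert w I)) \<le> 6 * card (insert w I)"
      using card_cn_insert[OF w(1), of I] c6 Ic cI by linarith
    have P': "P (insert w I)" unfolding P_def using i2 i3 IW w(1) by blast
    then show ?thesis using mx cI by fastforce
  qed
qed


lemma card_ins_le: "finite A \<Longrightarrow> card (insert x A) \<le> card A + 1"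
  by (simp add: card_insert_if)

lemma main: assumes ne: "W \<noteq> {}" and nk: "\<not> (card W = 7 \<and> (\<forall>u\<in>W. card (nb u) = 6))"
  shows "\<exists>I. good I"
proof (rule ccontr)
  assume ng: "\<nexists>I. good I"
  have d6: "card (nb u) = 6" if u: "u \<in> W" for u
  proof (rule ccontr)
    assume "card (nb u) \<noteq> 6"
    then have c5: "card (nb u) \<le> 5" using nb_card[OF u] by linarith
    have "cn {u} = insert u (nb u)" using u by (auto simp: cn_def nb_def)
    hence "card (cn {u}) \<le> 6" using card_ins_le[OF nb_fin, of u u] c5 by simp
    moreover have "indep {u}" using irr by (simp add: indep_def)
    ultimately show False using ext[of "{u}"] u ng by simp
  qed
  define P where "P = (\<lambda>I. I \<subseteq> W \<and> indep I \<and> I \<noteq> {} \<and> card (cn I) \<le> 6 * card I + 1 \<and> cn I \<noteq> W)"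
  obtain r where r: "r \<in> W" using ne by blast
  have cnr: "cn {r} = insert r (nb r)" using r by (auto simp: cn_def nb_def)
  have rnb: "r \<notin> nb r" using irr by (simp add: nb_def)
  have c7: "card (cn {r}) = 7" using cnr rnb d6[OF r] nb_fin by simp
  have "cn {r} \<noteq> W" using c7 d6 nk by auto
  then have Pr: "P {r}" unfolding P_def using r c7 irr by (simp add: indep_def)
  have bd: "\<forall>y. P y \<longrightarrow> card y < card W + 1"
    unfolding P_def using fin card_mono by (metis less_Suc_eq_le Suc_eq_plus1)
  obtain I where I: "P I" and mx: "\<forall>y. P y \<longrightarrow> card y \<le> card I"
    using Lattices_Big.ex_has_greatest_nat[of P "{r}" card "card W + 1", OF Pr bd] by blast
  have IW: "I \<subseteq> W" and Ii: "indep I" and Ine: "I \<noteq> {}" and Ic: "card (cn I) \<le> 6 * card I + 1"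
    and IneW: "cn I \<noteq> W"
    using I unfolding P_def by auto
  define D where "D = cn I"
  have DW: "D \<subseteq> W" using cn_sub D_def by simp
  have fI: "finite I" using IW finite_subset[OF _ fin] by blast
  have cl: "nb w \<inter> D = {s} \<and> cn (insert w I) = W"
    if w: "w \<in> W" "w \<notin> D" "s \<in> D" "R s w" for w s
  proof -
    have wI: "w \<notin> I" using w IW I_sub_cn D_def by blast
    have cI: "card (insert w I) = card I + 1" using wI fI by simp
    have i2: "indep (insert w I)" using indep_insert[OF Ii w(1)] w(2) D_def by simp
    have sn: "s \<in> nb w" using sym[OF w(4)] w(3) DW by (auto simp: nb_def)
    have one: "nb w \<inter> D = {s}"
    proof (rule ccontr)
      assume "nb w \<inter> D \<noteq> {s}"
      then obtain s' where s': "s' \<in> nb w" "s' \<in> D" "s' \<noteq> s" using sn w(3) by blast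
      have "insert w (nb w) - cn I \<subseteq> insert w (nb w) - {s, s'}" using w(3) s' D_def by blast
      then have "card (insert w (nb w) - cn I) \<le> card (insert w (nb w) - {s, s'})"
        by (meson card_mono finite_Diff finite_insert nb_fin)
      also have "\<dots> = card (insert w (nb w)) - 2" using sn s' nb_fin by (simp add: card_Diff_subset)
      also have "\<dots> \<le> 5" using nb_card[OF w(1)] nb_fin by (auto simp: card_insert_if)
      finally have "card (insert w (nb w) - cn I) \<le> 5" .
      then have "card (cn (insert w I)) \<le> 6 * card (insert w I)"
        using card_cn_insert[OF w(1), of I] Ic cI by linarith
      then show False using ext[OF _ i2] IW w(1) ng by auto
    qed
    have "insert w (nb w) - cn I \<subseteq> insert w (nb w) - {s}" using w(3) D_def by blast
    then have "card (insert w (nb w) - cn I) \<le> card (insert w (nb w) - {s})"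
      by (meson card_mono finite_Diff finite_insert nb_fin)
    also have "\<dots> = card (insert w (nb w)) - 1" using sn nb_fin by simp
    also have "\<dots> \<le> 6" using nb_card[OF w(1)] nb_fin by (auto simp: card_insert_if)
    finally have "card (insert w (nb w) - cn I) \<le> 6" .
    then have c': "card (cn (insert w I)) \<le> 6 * card (insert w I) + 1"
      using card_cn_insert[OF w(1), of I] Ic cI by linarith
    have "cn (insert w I) = W"
    proof (rule ccontr)
      assume "cn (insert w I) \<noteq> W"
      then have "P (insert w I)" unfolding P_def using c' i2 IW w(1) by blast
      then show False using mx cI by fastforce
    qed
    then show ?thesis using one by blast
  qed
  obtain u where u: "u \<in> W" "u \<notin> D" using IneW DW D_def by blast
  obtain i0 where "i0 \<in> I" using Ine by blast
  then have "i0 \<in> D" using IW I_sub_cn D_def by blast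
  then obtain w0 s0 where w0: "w0 \<in> W - D" "s0 \<in> D" "R s0 w0"
    using exit[OF DW _ u] by blast
  define Rr where "Rr = W - D"
  have w0R: "w0 \<in> Rr" using w0 Rr_def by simp
  have cl0: "nb w0 \<inter> D = {s0}" "cn (insert w0 I) = W" using cl[of w0 s0] w0 by auto
  have "Rr \<subseteq> insert w0 (nb w0 - {s0})"
  proof
    fix x assume x: "x \<in> Rr"
    then have "x \<in> cn (insert w0 I)" using cl0 Rr_def by simp
    then have "x \<in> insert w0 (nb w0)" using cn_insert[of w0 I] w0 x Rr_def D_def by auto
    then show "x \<in> insert w0 (nb w0 - {s0})" using x w0 Rr_def by auto
  qed
  then have cR6: "card Rr \<le> 6"
  proof -
    have s0n: "s0 \<in> nb w0" using cl0 by blast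
    have "card (nb w0 - {s0}) = 5" using s0n d6[of w0] w0 nb_fin by simp
    then have "card (insert w0 (nb w0 - {s0})) \<le> 6" using card_ins_le[of "nb w0 - {s0}" w0] nb_fin by simp
    then show ?thesis using card_mono[OF _ \<open>Rr \<subseteq> _\<close>] nb_fin by simp
  qed
  have fR: "finite Rr" using fin Rr_def by simp
  have e1: "\<exists>s. nb x \<inter> D = {s}" if x: "x \<in> Rr" for x
  proof -
    have xW: "x \<in> W" "x \<notin> D" using x Rr_def by auto
    have "\<exists>s\<in>D. R s x"
    proof (rule ccontr)
      assume "\<not> (\<exists>s\<in>D. R s x)"
      then have "nb x \<subseteq> Rr - {x}"
      proof -
        assume ns: "\<not> (\<exists>s\<in>D. R s x)"
        show ?thesis
        proof
          fix y assume y: "y \<in> nb x"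
          then have yW: "y \<in> W" and Rxy: "R x y" by (auto simp: nb_def)
          have "y \<notin> D" using ns sym[OF Rxy] by blast
          moreover have "y \<noteq> x" using Rxy irr by blast
          ultimately show "y \<in> Rr - {x}" using yW Rr_def by blast
        qed
      qed
      then have "card (nb x) \<le> card (Rr - {x})" using fR card_mono by blast
      also have "\<dots> \<le> 5" using cR6 x fR by simp
      finally show False using d6 xW by simp
    qed
    then obtain s where "s \<in> D" "R s x" by blast
    then show ?thesis using cl[of x s] xW by blast
  qed
  have e3: "Rr - {x} \<subseteq> nb x" and cR: "card Rr = 6" if x: "x \<in> Rr" for x
  proof -
    obtain s where s: "nb x \<inter> D = {s}" using e1 x by blast
    have xW: "x \<in> W" using x Rr_def by simp
    have eq: "nb x \<inter> Rr = nb x - {s}" using s Rr_def by (auto simp: nb_def)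
    have sx: "s \<in> nb x" using s by blast
    have c5: "card (nb x \<inter> Rr) = 5" using eq sx d6[OF xW] nb_fin by simp
    have sub: "nb x \<inter> Rr \<subseteq> Rr - {x}" using irr by (auto simp: nb_def)
    have cx: "card (Rr - {x}) \<le> 5" using cR6 x fR by simp
    have "nb x \<inter> Rr = Rr - {x}"
      using card_subset_eq[OF _ sub] fR c5 cx card_mono[OF _ sub] by simp
    then show "Rr - {x} \<subseteq> nb x" by blast
    show "card Rr = 6" using \<open>nb x \<inter> Rr = Rr - {x}\<close> c5 x fR by (simp add: card_Diff_singleton)
  qed
  show False
  proof (cases "\<exists>r1 r2 z. r1 \<in> Rr \<and> r2 \<in> Rr \<and> z \<in> D \<and> R r1 z \<and> \<not> R r2 z")
    case True
    then obtain r1 r2 z where rz: "r1 \<in> Rr" "r2 \<in> Rr" "z \<in> D" "R r1 z" "\<not> R r2 z" by blast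
    have r1W: "r1 \<in> W" and r2W: "r2 \<in> W" and zW: "z \<in> W" using rz Rr_def DW by auto
    obtain t where t: "t \<in> W" "R r1 t" "R z t" using tri[OF r1W zW rz(4)] by blast
    obtain s1 where s1: "nb r1 \<inter> D = {s1}" using e1 rz(1) by blast
    have "z = s1" using s1 rz zW by (auto simp: nb_def)
    have tD: "t \<notin> D"
    proof
      assume "t \<in> D"
      then have "t = s1" using s1 t by (auto simp: nb_def)
      then show False using \<open>z = s1\<close> t irr by simp
    qed
    have tR: "t \<in> Rr" using tD t Rr_def by simp
    have tr2: "t \<noteq> r2" using t rz sym by blast
    have r12: "r1 \<noteq> r2" using rz by blast
    have r1t: "r1 \<noteq> t" using t irr by blast
    have zr2: "z \<noteq> r2" using rz Rr_def by blast
    define J where "J = {r2, z}"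
    have JW: "J \<subseteq> W" using r2W zW J_def by simp
    have Ji: "indep J" using rz(5) sym[of z r2] irr J_def by (auto simp: indep_def)
    have cJ: "card J = 2" using zr2 J_def by simp
    have cnJ: "cn J = insert r2 (nb r2) \<union> insert z (nb z)" using r2W zW J_def by (auto simp: cn_def nb_def)
    have in1: "{r1, t} \<subseteq> insert r2 (nb r2) \<inter> insert z (nb z)"
      using e3[OF rz(2)] rz(1) tR r12 tr2 t r1W sym[OF rz(4)] by (auto simp: nb_def)
    have ci: "card (insert r2 (nb r2) \<inter> insert z (nb z)) \<ge> 2"
      using card_mono[OF _ in1] r1t nb_fin by simp
    have ca: "card (insert r2 (nb r2)) \<le> 7" using nb_card[OF r2W] card_ins_le[OF nb_fin, of r2 r2] by linarith
    have cb: "card (insert z (nb z)) \<le> 7" using nb_card[OF zW] card_ins_le[OF nb_fin, of z z] by linarith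
    have "card (cn J) + card (insert r2 (nb r2) \<inter> insert z (nb z)) = card (insert r2 (nb r2)) + card (insert z (nb z))"
      unfolding cnJ using card_Un_Int[of "insert r2 (nb r2)" "insert z (nb z)"] nb_fin by simp
    then have "card (cn J) \<le> 6 * card J" using ci ca cb cJ by linarith
    then show False using ext[OF JW Ji] ng J_def by auto
  next
    case False
    then have allz: "\<And>r. r \<in> Rr \<Longrightarrow> R r s0" using w0 w0R sym by blast
    have s0W: "s0 \<in> W" using w0 DW by blast
    have sub: "Rr \<subseteq> nb s0"
    proof
      fix r assume r: "r \<in> Rr"
      show "r \<in> nb s0" using sym[OF allz[OF r]] r Rr_def by (simp add: nb_def)
    qed
    have nbz: "nb s0 = Rr" using card_subset_eq[OF nb_fin sub] d6[OF s0W] cR[OF w0R] by simp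
    define K where "K = insert s0 Rr"
    have KW: "K \<subseteq> W" using s0W Rr_def K_def by auto
    have clK: "v \<in> K" if "x \<in> K" "v \<in> W" "R x v" for x v
    proof (cases "x = s0")
      case True then show ?thesis using nbz that K_def by (auto simp: nb_def)
    next
      case False
      then have xR: "x \<in> Rr" using that K_def by simp
      obtain s where s: "nb x \<inter> D = {s}" using e1 xR by blast
      have "s0 \<in> nb x \<inter> D" using allz[OF xR] s0W w0 by (auto simp: nb_def)
      then have "s = s0" using s by auto
      show ?thesis
      proof (cases "v \<in> D")
        case True then have "v \<in> nb x \<inter> D" using that by (auto simp: nb_def)
        then show ?thesis using s \<open>s = s0\<close> K_def by auto
      next
        case False then show ?thesis using that Rr_def K_def by auto
      qed
    qed
    have "K = W"
    proof (rule ccontr)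
      assume "K \<noteq> W"
      then obtain y where "y \<in> W" "y \<notin> K" using KW by blast
      then obtain w s where "w \<in> W - K" "s \<in> K" "R s w" using exit[OF KW _] K_def by blast
      then show False using clK by blast
    qed
    moreover have "card K = 7" using cR[OF w0R] fR w0 K_def Rr_def by simp
    ultimately show False using nk d6 by auto
  qed
qed

end



definition Lset :: "nat \<Rightarrow> nat set" where
  "Lset k = {k, (k+1) mod 7, (k+3) mod 7}"

locale fano =
  fixes P L :: "'a set" and I :: "'a \<Rightarrow> 'a \<Rightarrow> bool"
  assumes Pc: "card P = 7"
    and Lc: "\<And>l. l \<in> L \<Longrightarrow> card {p\<in>P. I p l} = 3"
    and Pl: "\<And>p. p \<in> P \<Longrightarrow> card {l\<in>L. I p l} = 3"
    and ex: "\<And>p q. p \<in> P \<Longrightarrow> q \<in> P \<Longrightarrow> p \<noteq> q \<Longrightarrow> \<exists>l\<in>L. I p l \<and> I q l"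
    and un: "\<And>p q l l'. p \<in> P \<Longrightarrow> q \<in> P \<Longrightarrow> p \<noteq> q \<Longrightarrow> l \<in> L \<Longrightarrow> l' \<in> L \<Longrightarrow>
              I p l \<Longrightarrow> I q l \<Longrightarrow> I p l' \<Longrightarrow> I q l' \<Longrightarrow> l = l'"
begin

definition pts where "pts l = {p\<in>P. I p l}"

lemma finP: "finite P" using Pc card.infinite by fastforce

lemma third: assumes "l \<in> L" "a \<in> pts l" "b \<in> pts l" "a \<noteq> b"
  shows "\<exists>c. pts l = {a,b,c} \<and> c \<noteq> a \<and> c \<noteq> b"
proof -
  have c3: "card (pts l) = 3" using Lc assms(1) pts_def by simp
  have fin: "finite (pts l)" using finP pts_def by simp
  have "card (pts l - {a,b}) = 1" using c3 assms fin by (simp add: card_Diff_subset)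
  then obtain c where c: "pts l - {a,b} = {c}" using card_1_singletonE by blast
  then have "pts l = {a,b,c}" using assms by blast
  then show ?thesis using c by blast
qed

lemma pts_eq: assumes "l \<in> L" "a \<in> pts l" "b \<in> pts l" "c \<in> pts l" "a \<noteq> b" "a \<noteq> c" "b \<noteq> c"
  shows "pts l = {a,b,c}"
proof -
  have c3: "card (pts l) = 3" using Lc assms(1) pts_def by simp
  have fin: "finite (pts l)" using finP pts_def by simp
  have "{a,b,c} \<subseteq> pts l" using assms by blast
  moreover have "card {a,b,c} = 3" using assms by simp
  ultimately show ?thesis using card_subset_eq[OF fin] c3 by metis
qed

lemma U: "l \<in> L \<Longrightarrow> l' \<in> L \<Longrightarrow> a \<in> pts l \<Longrightarrow> b \<in> pts l \<Longrightarrow> a \<in> pts l' \<Longrightarrow> b \<in> pts l' \<Longrightarrow> a \<noteq> b \<Longrightarrow> l = l'"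
  using un unfolding pts_def by blast

lemma line: assumes "p \<in> P" "q \<in> P" "p \<noteq> q" obtains l where "l \<in> L" "p \<in> pts l" "q \<in> pts l"
  using ex[OF assms] assms unfolding pts_def by blast

lemma swap_contra: "l \<in> L \<Longrightarrow> l' \<in> L \<Longrightarrow> x \<in> pts l \<Longrightarrow> y \<in> pts l \<Longrightarrow> x \<in> pts l' \<Longrightarrow> y \<in> pts l'
  \<Longrightarrow> x \<noteq> y \<Longrightarrow> z \<in> pts l \<Longrightarrow> z \<notin> pts l' \<Longrightarrow> False"
  using U by blast

lemma fano_structure:
  "\<exists>ps ls. length ps = 7 \<and> length ls = 7 \<and> distinct ps \<and> distinct ls \<and> set ps = P \<and> set ls = L \<and>
     (\<forall>k<7. pts (ls ! k) = (\<lambda>i. ps ! i) ` Lset k)"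
proof -
  have "P \<noteq> {}" using Pc by auto
  then obtain a0 where a0: "a0 \<in> P" by blast
  have "card (P - {a0}) = 6" using Pc a0 finP by simp
  then have "P - {a0} \<noteq> {}" by (metis card.empty zero_neq_numeral)
  then obtain a1 where a1: "a1 \<in> P" "a1 \<noteq> a0" by blast
  obtain m0 where m0: "m0 \<in> L" "a0 \<in> pts m0" "a1 \<in> pts m0"
    using line[OF a0 a1(1)] a1 by blast
  obtain a3 where a3: "pts m0 = {a0,a1,a3}" "a3 \<noteq> a0" "a3 \<noteq> a1" using third[OF m0] a1 by blast
  have "pts m0 \<subseteq> P" "card (pts m0) = 3" using Lc[OF m0(1)] pts_def by auto
  then have "card (P - pts m0) = 4" using Pc finP by (simp add: card_Diff_subset finite_subset)
  then have "P - pts m0 \<noteq> {}" by (metis card.empty zero_neq_numeral)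
  then obtain a2 where a2: "a2 \<in> P" "a2 \<notin> pts m0" by blast
  have d2: "a2 \<noteq> a0" "a2 \<noteq> a1" "a2 \<noteq> a3" using a2 a3 by auto
  have a3P: "a3 \<in> P" using a3 pts_def by auto
  obtain m1 where m1: "m1 \<in> L" "a1 \<in> pts m1" "a2 \<in> pts m1"
    using line[OF a1(1) a2(1)] d2 by blast
  obtain a4 where a4: "pts m1 = {a1,a2,a4}" "a4 \<noteq> a1" "a4 \<noteq> a2" using third[OF m1] d2 by blast
  obtain m2 where m2: "m2 \<in> L" "a2 \<in> pts m2" "a3 \<in> pts m2"
    using line[OF a2(1) a3P] d2 by blast
  obtain a5 where a5: "pts m2 = {a2,a3,a5}" "a5 \<noteq> a2" "a5 \<noteq> a3" using third[OF m2] d2 by blast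
  obtain m6 where m6: "m6 \<in> L" "a0 \<in> pts m6" "a2 \<in> pts m6"
    using line[OF a0 a2(1)] d2 by blast
  obtain a6 where a6: "pts m6 = {a0,a2,a6}" "a6 \<noteq> a0" "a6 \<noteq> a2" using third[OF m6] d2 by blast
  have a4P: "a4 \<in> P" "a5 \<in> P" "a6 \<in> P" using a4 a5 a6 pts_def by auto
  have d4: "a4 \<noteq> a0"
  proof assume "a4 = a0"
    then have "m1 = m0" using U[OF m1(1) m0(1), of a0 a1] a4 a3 a1 by auto
    then show False using a2 m1 by simp
  qed
  have d4': "a4 \<noteq> a3"
  proof assume "a4 = a3"
    then have "m1 = m0" using U[OF m1(1) m0(1), of a1 a3] a4 a3 a1 by auto
    then show False using a2 m1 by simp
  qed
  have d5: "a5 \<noteq> a0"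
  proof assume "a5 = a0"
    then have "m2 = m0" using U[OF m2(1) m0(1), of a0 a3] a5 a3 by auto
    then show False using a2 m2 by simp
  qed
  have d5': "a5 \<noteq> a1"
  proof assume "a5 = a1"
    then have "m2 = m0" using U[OF m2(1) m0(1), of a1 a3] a5 a3 by auto
    then show False using a2 m2 by simp
  qed
  have d5'': "a5 \<noteq> a4"
  proof assume "a5 = a4"
    then have "m2 = m1" using U[OF m2(1) m1(1), of a2 a4] a5 a4 by auto
    then show False using a4 m2 d2 d4' a3 by auto
  qed
  have d6: "a6 \<noteq> a1"
  proof assume "a6 = a1"
    then have "m6 = m0" using U[OF m6(1) m0(1), of a0 a1] a6 a3 a1 by auto
    then show False using a2 m6 by simp
  qed
  have d6': "a6 \<noteq> a3"
  proof assume "a6 = a3"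
    then have "m6 = m0" using U[OF m6(1) m0(1), of a0 a3] a6 a3 by auto
    then show False using a2 m6 by simp
  qed
  have d6'': "a6 \<noteq> a4"
  proof assume "a6 = a4"
    then have "m6 = m1" using U[OF m6(1) m1(1), of a2 a4] a6 a4 by auto
    then show False using a4 m6 d2 d4 a1 by auto
  qed
  have d6''': "a6 \<noteq> a5"
  proof assume "a6 = a5"
    then have "m6 = m2" using U[OF m6(1) m2(1), of a2 a5] a6 a5 by auto
    then show False using a5 m6 d2 d5 a3 by auto
  qed
  note D = a1(2) a3(2,3) d2 a4(2,3) d4 d4' a5(2,3) d5 d5' d5'' a6(2,3) d6 d6' d6'' d6'''
  have Peq: "P = {a0,a1,a2,a3,a4,a5,a6}"
  proof -
    have sub: "{a0,a1,a2,a3,a4,a5,a6} \<subseteq> P" using a0 a1 a2 a3P a4P by auto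
    have "card {a0,a1,a2,a3,a4,a5,a6} = 7" using D by (simp add: eq_commute)
    then show ?thesis using card_subset_eq[OF finP sub] Pc by simp
  qed
  note DD = D D[THEN not_sym]
  obtain m3 where m3: "m3 \<in> L" "a3 \<in> pts m3" "a4 \<in> pts m3" using line[OF a3P a4P(1)] D by blast
  obtain q3 where q3: "pts m3 = {a3,a4,q3}" "q3 \<noteq> a3" "q3 \<noteq> a4" using third[OF m3] D by blast
  have "q3 \<in> P" using q3 pts_def by auto
  have "q3 \<noteq> a0"
  proof assume h: "q3 = a0"
    show False by (rule swap_contra[OF m3(1) m0(1), of a0 a3 a4]) (simp_all add: q3(1) a3(1) h DD)
  qed
  have "q3 \<noteq> a1"
  proof assume h: "q3 = a1"
    show False by (rule swap_contra[OF m3(1) m0(1), of a1 a3 a4]) (simp_all add: q3(1) a3(1) h DD)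
  qed
  have "q3 \<noteq> a2"
  proof assume h: "q3 = a2"
    show False by (rule swap_contra[OF m3(1) m1(1), of a2 a4 a3]) (simp_all add: q3(1) a4(1) h DD)
  qed
  have "q3 \<noteq> a5"
  proof assume h: "q3 = a5"
    show False by (rule swap_contra[OF m3(1) m2(1), of a5 a3 a4]) (simp_all add: q3(1) a5(1) h DD)
  qed
  have "q3 = a6" using \<open>q3 \<in> P\<close> Peq q3 \<open>q3 \<noteq> a0\<close> \<open>q3 \<noteq> a1\<close> \<open>q3 \<noteq> a2\<close> \<open>q3 \<noteq> a5\<close> by simp
  then have p3: "pts m3 = {a3,a4,a6}" using q3 by simp
  obtain m4 where m4: "m4 \<in> L" "a4 \<in> pts m4" "a5 \<in> pts m4" using line[OF a4P(1) a4P(2)] D by blast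
  obtain q4 where q4: "pts m4 = {a4,a5,q4}" "q4 \<noteq> a4" "q4 \<noteq> a5" using third[OF m4] D by blast
  have "q4 \<in> P" using q4 pts_def by auto
  have "q4 \<noteq> a1"
  proof assume h: "q4 = a1"
    show False by (rule swap_contra[OF m4(1) m1(1), of a1 a4 a5]) (simp_all add: q4(1) a4(1) h DD)
  qed
  have "q4 \<noteq> a2"
  proof assume h: "q4 = a2"
    show False by (rule swap_contra[OF m4(1) m1(1), of a2 a4 a5]) (simp_all add: q4(1) a4(1) h DD)
  qed
  have "q4 \<noteq> a3"
  proof assume h: "q4 = a3"
    show False by (rule swap_contra[OF m4(1) m2(1), of a3 a5 a4]) (simp_all add: q4(1) a5(1) h DD)
  qed
  have "q4 \<noteq> a6"
  proof assume h: "q4 = a6"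
    show False by (rule swap_contra[OF m4(1) m3(1), of a6 a4 a5]) (simp_all add: q4(1) p3 h DD)
  qed
  have "q4 = a0" using \<open>q4 \<in> P\<close> Peq q4 \<open>q4 \<noteq> a1\<close> \<open>q4 \<noteq> a2\<close> \<open>q4 \<noteq> a3\<close> \<open>q4 \<noteq> a6\<close> by simp
  then have p4: "pts m4 = {a4,a5,a0}" using q4 by simp
  obtain m5 where m5: "m5 \<in> L" "a5 \<in> pts m5" "a6 \<in> pts m5" using line[OF a4P(2) a4P(3)] D by blast
  obtain q5 where q5: "pts m5 = {a5,a6,q5}" "q5 \<noteq> a5" "q5 \<noteq> a6" using third[OF m5] D by blast
  have "q5 \<in> P" using q5 pts_def by auto
  have "q5 \<noteq> a0"
  proof assume h: "q5 = a0"
    show False by (rule swap_contra[OF m5(1) m6(1), of a0 a6 a5]) (simp_all add: q5(1) a6(1) h DD)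
  qed
  have "q5 \<noteq> a2"
  proof assume h: "q5 = a2"
    show False by (rule swap_contra[OF m5(1) m6(1), of a2 a6 a5]) (simp_all add: q5(1) a6(1) h DD)
  qed
  have "q5 \<noteq> a3"
  proof assume h: "q5 = a3"
    show False by (rule swap_contra[OF m5(1) m3(1), of a3 a6 a5]) (simp_all add: q5(1) p3 h DD)
  qed
  have "q5 \<noteq> a4"
  proof assume h: "q5 = a4"
    show False by (rule swap_contra[OF m5(1) m4(1), of a4 a5 a6]) (simp_all add: q5(1) p4 h DD)
  qed
  have "q5 = a1" using \<open>q5 \<in> P\<close> Peq q5 \<open>q5 \<noteq> a0\<close> \<open>q5 \<noteq> a2\<close> \<open>q5 \<noteq> a3\<close> \<open>q5 \<noteq> a4\<close> by simp
  then have p5: "pts m5 = {a5,a6,a1}" using q5 by simp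
  note PT = a3(1) a4(1) a5(1) p3 p4 p5 a6(1)
  define ps where "ps = [a0,a1,a2,a3,a4,a5,a6]"
  define ls where "ls = [m0,m1,m2,m3,m4,m5,m6]"
  have dps: "distinct ps" using DD unfolding ps_def by simp
  have sps: "set ps = P" using Peq ps_def by auto
  have ptsk: "pts (ls ! k) = (\<lambda>i. ps ! i) ` Lset k" if k: "k < 7" for k
  proof -
    have "k = 0 \<or> k = 1 \<or> k = 2 \<or> k = 3 \<or> k = 4 \<or> k = 5 \<or> k = 6" using k by auto
    moreover have "k = 0 \<Longrightarrow> ?thesis" using PT by (simp add: ls_def ps_def Lset_def insert_commute)
    moreover have "k = 1 \<Longrightarrow> ?thesis" using PT by (simp add: ls_def ps_def Lset_def insert_commute)
    moreover have "k = 2 \<Longrightarrow> ?thesis" using PT by (simp add: ls_def ps_def Lset_def insert_commute)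
    moreover have "k = 3 \<Longrightarrow> ?thesis" using PT by (simp add: ls_def ps_def Lset_def insert_commute)
    moreover have "k = 4 \<Longrightarrow> ?thesis" using PT by (simp add: ls_def ps_def Lset_def insert_commute)
    moreover have "k = 5 \<Longrightarrow> ?thesis" using PT by (simp add: ls_def ps_def Lset_def insert_commute)
    moreover have "k = 6 \<Longrightarrow> ?thesis" using PT by (simp add: ls_def ps_def Lset_def insert_commute)
    ultimately show ?thesis by blast
  qed
  have n01: "m0 \<noteq> m1"
  proof assume h: "m0 = m1"
    have "a0 \<in> pts m0" using a3(1) by simp
    then have "a0 \<in> pts m1" using h by simp
    then show False using a4(1) DD by simp
  qed
  have n02: "m0 \<noteq> m2"
  proof assume h: "m0 = m2"
    have "a0 \<in> pts m0" using a3(1) by simp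
    then have "a0 \<in> pts m2" using h by simp
    then show False using a5(1) DD by simp
  qed
  have n03: "m0 \<noteq> m3"
  proof assume h: "m0 = m3"
    have "a0 \<in> pts m0" using a3(1) by simp
    then have "a0 \<in> pts m3" using h by simp
    then show False using p3 DD by simp
  qed
  have n04: "m0 \<noteq> m4"
  proof assume h: "m0 = m4"
    have "a1 \<in> pts m0" using a3(1) by simp
    then have "a1 \<in> pts m4" using h by simp
    then show False using p4 DD by simp
  qed
  have n05: "m0 \<noteq> m5"
  proof assume h: "m0 = m5"
    have "a0 \<in> pts m0" using a3(1) by simp
    then have "a0 \<in> pts m5" using h by simp
    then show False using p5 DD by simp
  qed
  have n06: "m0 \<noteq> m6"
  proof assume h: "m0 = m6"
    have "a1 \<in> pts m0" using a3(1) by simp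
    then have "a1 \<in> pts m6" using h by simp
    then show False using a6(1) DD by simp
  qed
  have n12: "m1 \<noteq> m2"
  proof assume h: "m1 = m2"
    have "a1 \<in> pts m1" using a4(1) by simp
    then have "a1 \<in> pts m2" using h by simp
    then show False using a5(1) DD by simp
  qed
  have n13: "m1 \<noteq> m3"
  proof assume h: "m1 = m3"
    have "a1 \<in> pts m1" using a4(1) by simp
    then have "a1 \<in> pts m3" using h by simp
    then show False using p3 DD by simp
  qed
  have n14: "m1 \<noteq> m4"
  proof assume h: "m1 = m4"
    have "a1 \<in> pts m1" using a4(1) by simp
    then have "a1 \<in> pts m4" using h by simp
    then show False using p4 DD by simp
  qed
  have n15: "m1 \<noteq> m5"
  proof assume h: "m1 = m5"
    have "a2 \<in> pts m1" using a4(1) by simp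
    then have "a2 \<in> pts m5" using h by simp
    then show False using p5 DD by simp
  qed
  have n16: "m1 \<noteq> m6"
  proof assume h: "m1 = m6"
    have "a1 \<in> pts m1" using a4(1) by simp
    then have "a1 \<in> pts m6" using h by simp
    then show False using a6(1) DD by simp
  qed
  have n23: "m2 \<noteq> m3"
  proof assume h: "m2 = m3"
    have "a2 \<in> pts m2" using a5(1) by simp
    then have "a2 \<in> pts m3" using h by simp
    then show False using p3 DD by simp
  qed
  have n24: "m2 \<noteq> m4"
  proof assume h: "m2 = m4"
    have "a2 \<in> pts m2" using a5(1) by simp
    then have "a2 \<in> pts m4" using h by simp
    then show False using p4 DD by simp
  qed
  have n25: "m2 \<noteq> m5"
  proof assume h: "m2 = m5"
    have "a2 \<in> pts m2" using a5(1) by simp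
    then have "a2 \<in> pts m5" using h by simp
    then show False using p5 DD by simp
  qed
  have n26: "m2 \<noteq> m6"
  proof assume h: "m2 = m6"
    have "a3 \<in> pts m2" using a5(1) by simp
    then have "a3 \<in> pts m6" using h by simp
    then show False using a6(1) DD by simp
  qed
  have n34: "m3 \<noteq> m4"
  proof assume h: "m3 = m4"
    have "a3 \<in> pts m3" using p3 by simp
    then have "a3 \<in> pts m4" using h by simp
    then show False using p4 DD by simp
  qed
  have n35: "m3 \<noteq> m5"
  proof assume h: "m3 = m5"
    have "a3 \<in> pts m3" using p3 by simp
    then have "a3 \<in> pts m5" using h by simp
    then show False using p5 DD by simp
  qed
  have n36: "m3 \<noteq> m6"
  proof assume h: "m3 = m6"
    have "a3 \<in> pts m3" using p3 by simp
    then have "a3 \<in> pts m6" using h by simp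
    then show False using a6(1) DD by simp
  qed
  have n45: "m4 \<noteq> m5"
  proof assume h: "m4 = m5"
    have "a4 \<in> pts m4" using p4 by simp
    then have "a4 \<in> pts m5" using h by simp
    then show False using p5 DD by simp
  qed
  have n46: "m4 \<noteq> m6"
  proof assume h: "m4 = m6"
    have "a4 \<in> pts m4" using p4 by simp
    then have "a4 \<in> pts m6" using h by simp
    then show False using a6(1) DD by simp
  qed
  have n56: "m5 \<noteq> m6"
  proof assume h: "m5 = m6"
    have "a5 \<in> pts m5" using p5 by simp
    then have "a5 \<in> pts m6" using h by simp
    then show False using a6(1) DD by simp
  qed
  have dls: "distinct ls" unfolding ls_def using n01 n02 n03 n04 n05 n06 n12 n13 n14 n15 n16 n23 n24 n25 n26 n34 n35 n36 n45 n46 n56 by simp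
  have lsL: "set ls \<subseteq> L" using m0 m1 m2 m3 m4 m5 m6 ls_def by auto
  have sls: "set ls = L"
  proof
    show "set ls \<subseteq> L" by (rule lsL)
    show "L \<subseteq> set ls"
    proof
      fix l assume l: "l \<in> L"
      have "card (pts l) = 3" using Lc l pts_def by simp
      then have "pts l \<noteq> {}" by (metis card.empty zero_neq_numeral)
      then obtain p where p: "p \<in> pts l" by blast
      then have pP: "p \<in> P" and Ipl: "I p l" using pts_def by auto
      have thr: "l \<in> set ls" if "x \<in> set ls" "y \<in> set ls" "z \<in> set ls" "x \<noteq> y" "x \<noteq> z" "y \<noteq> z"
        "p \<in> pts x" "p \<in> pts y" "p \<in> pts z" for x y z
      proof -
        have fl: "finite {l\<in>L. I p l}" using Pl[OF pP] by (metis card.infinite zero_neq_numeral)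
        have sub: "{x,y,z} \<subseteq> {l\<in>L. I p l}" using that(1-3,7-9) lsL unfolding pts_def by blast
        have "card {x,y,z} = 3" using that(4-6) by simp
        then have eq: "{x,y,z} = {l\<in>L. I p l}" using card_subset_eq[OF fl sub] Pl[OF pP] by simp
        have "l \<in> {l\<in>L. I p l}" using l Ipl by simp
        then have "l \<in> {x,y,z}" using eq by simp
        then show ?thesis using that(1-3) by blast
      qed
      have "p = a0 \<or> p = a1 \<or> p = a2 \<or> p = a3 \<or> p = a4 \<or> p = a5 \<or> p = a6" using pP Peq by auto
    moreover have "p = a0 \<Longrightarrow> l \<in> set ls"
      by (rule thr[of m0 m4 m6]) (simp_all add: ls_def PT DD n04 n06 n46)
    moreover have "p = a1 \<Longrightarrow> l \<in> set ls"
      by (rule thr[of m0 m1 m5]) (simp_all add: ls_def PT DD n01 n05 n15)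
    moreover have "p = a2 \<Longrightarrow> l \<in> set ls"
      by (rule thr[of m1 m2 m6]) (simp_all add: ls_def PT DD n12 n16 n26)
    moreover have "p = a3 \<Longrightarrow> l \<in> set ls"
      by (rule thr[of m0 m2 m3]) (simp_all add: ls_def PT DD n02 n03 n23)
    moreover have "p = a4 \<Longrightarrow> l \<in> set ls"
      by (rule thr[of m1 m3 m4]) (simp_all add: ls_def PT DD n13 n14 n34)
    moreover have "p = a5 \<Longrightarrow> l \<in> set ls"
      by (rule thr[of m2 m4 m5]) (simp_all add: ls_def PT DD n24 n25 n45)
    moreover have "p = a6 \<Longrightarrow> l \<in> set ls"
      by (rule thr[of m3 m5 m6]) (simp_all add: ls_def PT DD n35 n36 n56)
      ultimately show "l \<in> set ls" by blast
    qed
  qed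
  have "length ps = 7" "length ls = 7" by (simp_all add: ps_def ls_def)
  then show ?thesis using dps dls sps sls ptsk by blast
qed

end




lemma even_invol: "finite S \<Longrightarrow> (\<forall>x\<in>S. f x \<in> S \<and> f (f x) = x \<and> f x \<noteq> x) \<Longrightarrow> even (card S)"
proof (induction "card S" arbitrary: S rule: less_induct)
  case less
  show ?case
  proof (cases "S = {}")
    case True then show ?thesis by simp
  next
    case False
    then obtain x where x: "x \<in> S" by blast
    define S' where "S' = S - {x, f x}"
    have fx: "f x \<in> S" "f x \<noteq> x" "f (f x) = x" using less.prems x by auto
    have inv: "\<forall>y\<in>S'. f y \<in> S' \<and> f (f y) = y \<and> f y \<noteq> y"
    proof
      fix y assume y: "y \<in> S'"
      have yS: "y \<in> S" "y \<noteq> x" "y \<noteq> f x" using y S'_def by auto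
      have fy: "f y \<in> S" "f (f y) = y" "f y \<noteq> y" using less.prems yS(1) by auto
      have "f y \<noteq> x"
      proof
        assume "f y = x" then have "f (f y) = f x" by simp
        then show False using fy yS by simp
      qed
      moreover have "f y \<noteq> f x"
      proof
        assume "f y = f x" then have "f (f y) = f (f x)" by simp
        then show False using fy fx yS by simp
      qed
      ultimately show "f y \<in> S' \<and> f (f y) = y \<and> f y \<noteq> y" using fy S'_def by simp
    qed
    have sub: "{x, f x} \<subseteq> S" using x fx by simp
    have c2: "card {x, f x} = 2" using fx by simp
    have cS': "card S' = card S - 2" unfolding S'_def using card_Diff_subset[OF _ sub] c2 by simp
    have ge: "card S \<ge> 2" using card_mono[OF less.prems(1) sub] c2 by simp
    then have "card S' < card S" using cS' by simp
    moreover have "finite S'" using less.prems(1) S'_def by simp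
    ultimately have "even (card S')" using less.hyps inv by blast
    moreover have "card S = card S' + 2" using cS' ge by simp
    ultimately show ?thesis by simp
  qed
qed

context
  fixes V :: "'a set" and E :: "'a \<Rightarrow> 'a \<Rightarrow> bool"
  assumes sg: "simple_graph V E" and cub: "cubic V E"
begin

definition hadj where "hadj u v \<longleftrightarrow> u \<in> V \<and> v \<in> V \<and> u \<noteq> v \<and> (\<exists>x. E u x \<and> E x v)"

lemma finV: "finite V" using sg by (simp add: simple_graph_def)
lemma Ein: "E u v \<Longrightarrow> u \<in> V \<and> v \<in> V" using sg by (simp add: simple_graph_def)
lemma Esym: "E u v \<Longrightarrow> E v u" using sg by (simp add: simple_graph_def)
lemma Eirr: "\<not> E v v" using sg by (simp add: simple_graph_def)
lemma N3: "v \<in> V \<Longrightarrow> card (nbhd V E v) = 3" using cub by (simp add: cubic_def)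
lemma Nfin: "finite (nbhd V E v)" using finV by (simp add: nbhd_def)

lemma hadjV: "hadj u v \<Longrightarrow> v \<in> V" unfolding hadj_def by blast

lemma hsym: "hadj u v \<Longrightarrow> hadj v u" unfolding hadj_def using Esym by blast
lemma hirr: "\<not> hadj u u" unfolding hadj_def by blast

lemma hdeg: assumes u: "u \<in> V" shows "card {v\<in>V. hadj u v} \<le> 6"
proof -
  have sub: "{v\<in>V. hadj u v} \<subseteq> (\<Union>x\<in>nbhd V E u. nbhd V E x - {u})"
    unfolding hadj_def nbhd_def using Ein by blast
  have "card (\<Union>x\<in>nbhd V E u. nbhd V E x - {u}) \<le> (\<Sum>x\<in>nbhd V E u. card (nbhd V E x - {u}))"
    using Nfin card_UN_le by blast
  also have "\<dots> = (\<Sum>x\<in>nbhd V E u. 2)"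
  proof (rule sum.cong)
    fix x assume x: "x \<in> nbhd V E u"
    then have "u \<in> nbhd V E x" "x \<in> V" using u Esym[of u x] by (auto simp: nbhd_def)
    then show "card (nbhd V E x - {u}) = 2" using N3 Nfin by simp
  qed simp
  also have "\<dots> = 6" using N3[OF u] by simp
  finally show ?thesis using card_mono[OF _ sub] Nfin by (meson finite_Diff finite_UN le_trans)
qed

lemma htri: assumes "hadj u v" shows "\<exists>t. hadj u t \<and> hadj v t"
proof -
  obtain x where x: "E u x" "E x v" "u \<noteq> v" "u \<in> V" "v \<in> V" using assms unfolding hadj_def by blast
  have xV: "x \<in> V" using x Ein by blast
  have "{u, v} \<subseteq> nbhd V E x" using Esym[OF x(1)] x(2,4,5) by (auto simp: nbhd_def)
  then have "card {u,v} < card (nbhd V E x)" using N3[OF xV] x by simp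
  then have "\<not> nbhd V E x \<subseteq> {u,v}" using card_mono[of "{u,v}" "nbhd V E x"] by auto
  then obtain t where t: "t \<in> nbhd V E x" "t \<notin> {u,v}" by blast
  then show ?thesis using x t Esym[OF x(2)] unfolding hadj_def nbhd_def by auto
qed


lemma comp_indep:
  assumes nh: "\<And>C. C \<subseteq> V \<Longrightarrow> C \<noteq> {} \<Longrightarrow> (\<forall>u\<in>C. \<forall>v. hadj u v \<longrightarrow> v \<in> C) \<Longrightarrow> card C = 7
     \<Longrightarrow> (\<forall>u\<in>C. card {v\<in>C. hadj u v} = 6) \<Longrightarrow> False"
  shows "W \<subseteq> V \<Longrightarrow> (\<forall>u\<in>W. \<forall>v. hadj u v \<longrightarrow> v \<in> W)
     \<Longrightarrow> \<exists>I \<subseteq> W. (\<forall>a\<in>I. \<forall>b\<in>I. \<not> hadj a b) \<and> card W \<le> 6 * card I"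
proof (induction "card W" arbitrary: W rule: less_induct)
  case less
  show ?case
  proof (cases "W = {}")
    case True then show ?thesis by auto
  next
    case False
    then obtain v where vW: "v \<in> W" by blast
    define rel where "rel = {(x,y). hadj x y}"
    define C where "C = {u. (v,u) \<in> rel\<^sup>*}"
    define relC where "relC = {(x,y). x \<in> C \<and> y \<in> C \<and> hadj x y}"
    have CW: "C \<subseteq> W"
    proof
      fix u assume "u \<in> C"
      then have "(v,u) \<in> rel\<^sup>*" by (simp add: C_def)
      then show "u \<in> W"
      proof (induction rule: rtrancl_induct)
        case base show ?case using vW .
      next
        case (step y z) then show ?case using less.prems(2) unfolding rel_def by blast
      qed
    qed
    have CV: "C \<subseteq> V" using CW less.prems by blast
    have vC: "v \<in> C" by (simp add: C_def)
    have Ccl1: "w \<in> C" if "u \<in> C" "hadj u w" for u w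
    proof -
      have "(v,u) \<in> rel\<^sup>*" "(u,w) \<in> rel" using that unfolding C_def rel_def by auto
      then have "(v,w) \<in> rel\<^sup>*" by (rule rtrancl_into_rtrancl)
      then show ?thesis unfolding C_def by simp
    qed
    have Ccl: "\<forall>u\<in>C. \<forall>w. hadj u w \<longrightarrow> w \<in> C" using Ccl1 by blast
    have toC: "(v,u) \<in> relC\<^sup>*" if "(v,u) \<in> rel\<^sup>*" for u
      using that
    proof (induction rule: rtrancl_induct)
      case base then show ?case by simp
    next
      case (step y z)
      have yC: "y \<in> C" using step(1) unfolding C_def by simp
      have hyz: "hadj y z" using step(2) unfolding rel_def by simp
      have "z \<in> C" using Ccl1[OF yC hyz] .
      then have "(y,z) \<in> relC" using yC hyz relC_def by auto
      then show ?case using step by (meson rtrancl_into_rtrancl)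
    qed
    have relCsym: "relC\<inverse> = relC" unfolding relC_def using hsym by auto
    have connC: "(a,b) \<in> relC\<^sup>*" if "a \<in> C" "b \<in> C" for a b
    proof -
      have "(v,a) \<in> relC\<^sup>*" "(v,b) \<in> relC\<^sup>*" using that toC C_def by auto
      then have "(a,v) \<in> relC\<^sup>*" using rtrancl_converseI[of v a relC] relCsym by simp
      then show ?thesis using \<open>(v,b) \<in> relC\<^sup>*\<close> by simp
    qed
    interpret ag: agraph C hadj
    proof
      show "finite C" using CV finV finite_subset by blast
      show "\<And>u v. hadj u v \<Longrightarrow> hadj v u" by (rule hsym)
      show "\<And>u. \<not> hadj u u" by (rule hirr)
      show "card {v\<in>C. hadj u v} \<le> 6" if "u \<in> C" for u
      proof -
        have "{v\<in>C. hadj u v} \<subseteq> {v\<in>V. hadj u v}" using CV by blast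
        then have "card {v\<in>C. hadj u v} \<le> card {v\<in>V. hadj u v}" using finV by (intro card_mono) auto
        then show ?thesis using hdeg[of u] that CV by force
      qed
      show "\<exists>t\<in>C. hadj u t \<and> hadj w t" if uw: "u \<in> C" "w \<in> C" "hadj u w" for u w
      proof -
        obtain t where "hadj u t" "hadj w t" using htri[OF uw(3)] by blast
        then show ?thesis using Ccl1[OF uw(1)] by blast
      qed
      show "(u, w) \<in> {(x, y). x \<in> C \<and> y \<in> C \<and> hadj x y}\<^sup>*" if "u \<in> C" "w \<in> C" for u w
        using connC[OF that] relC_def by simp
    qed
    have ncase: "\<not> (card C = 7 \<and> (\<forall>u\<in>C. card (ag.nb u) = 6))"
    proof
      assume a: "card C = 7 \<and> (\<forall>u\<in>C. card (ag.nb u) = 6)"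
      then have "\<forall>u\<in>C. card {v\<in>C. hadj u v} = 6" unfolding ag.nb_def by simp
      then show False using nh[OF CV _ Ccl] vC a by blast
    qed
    have "C \<noteq> {}" using vC by blast
    from ag.main[OF this ncase] obtain I where I: "ag.good I" by blast
    then have IC: "I \<subseteq> C" and Ii: "\<forall>a\<in>I. \<forall>b\<in>I. \<not> hadj a b" and Ic: "card C \<le> 6 * card I"
      unfolding ag.good_def ag.indep_def by auto
    define W' where "W' = W - C"
    have W'V: "W' \<subseteq> V" using less.prems(1) W'_def by blast
    have W'cl: "\<forall>u\<in>W'. \<forall>w. hadj u w \<longrightarrow> w \<in> W'"
    proof (intro ballI allI impI)
      fix u w assume u: "u \<in> W'" and h: "hadj u w"
      have "w \<in> W" using less.prems(2) u h W'_def by blast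
      moreover have "w \<notin> C"
      proof
        assume "w \<in> C"
        then have "u \<in> C" using Ccl1 hsym[OF h] by blast
        then show False using u W'_def by blast
      qed
      ultimately show "w \<in> W'" using W'_def by blast
    qed
    have finW: "finite W" using less.prems(1) finV by (rule finite_subset)
    have "W' \<subset> W" using vC vW W'_def by blast
    then have "card W' < card W" using finW psubset_card_mono by blast
    from less.hyps[OF this W'V W'cl] obtain I' where I': "I' \<subseteq> W'" "\<forall>a\<in>I'. \<forall>b\<in>I'. \<not> hadj a b" "card W' \<le> 6 * card I'"
      by blast
    have disj: "I \<inter> I' = {}" using IC I'(1) W'_def by blast
    have finC: "finite C" using CW finW by (rule finite_subset)
    have finI: "finite I" using IC finC by (rule finite_subset)
    have finI': "finite I'" using I'(1) finW W'_def by (metis finite_Diff finite_subset)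
    have ind: "\<forall>a\<in>I \<union> I'. \<forall>b\<in>I \<union> I'. \<not> hadj a b"
    proof (intro ballI)
      fix a b assume a: "a \<in> I \<union> I'" and b: "b \<in> I \<union> I'"
      show "\<not> hadj a b"
      proof
        assume h: "hadj a b"
        show False
        proof (cases "a \<in> I")
          case True
          then have "b \<in> C" using Ccl1 h IC by blast
          then have "b \<in> I" using b I'(1) W'_def by blast
          then show False using Ii True h by blast
        next
          case False
          then have aI': "a \<in> I'" using a by blast
          then have aC: "a \<notin> C" using I'(1) W'_def by blast
          show False
          proof (cases "b \<in> I")
            case True
            then have "a \<in> C" using Ccl1 hsym[OF h] IC by blast
            then show False using aC by blast
          next
            case False
            then have "b \<in> I'" using b by blast
            then show False using I'(2) aI' h by blast
          qed
        qed
      qed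
    qed
    have "card W' = card W - card C" unfolding W'_def using finC CW by (rule card_Diff_subset)
    moreover have "card C \<le> card W" using CW finW card_mono by blast
    ultimately have "card W = card C + card W'" by simp
    moreover have "card (I \<union> I') = card I + card I'" using disj finI finI' card_Un_disjoint by blast
    ultimately have "card W \<le> 6 * card (I \<union> I')" using Ic I'(3) by simp
    moreover have "I \<union> I' \<subseteq> W" using IC CW I'(1) W'_def by blast
    ultimately show ?thesis using ind by blast
  qed
qed

lemma istdf_from:
  assumes IV: "I \<subseteq> V" and Ii: "\<forall>a\<in>I. \<forall>b\<in>I. \<not> hadj a b" and Ic: "card V \<le> 6 * card I"
  shows "real_of_int (inv_signed_total_dom_num V E) \<ge> - (2 * real (card V) / 3)"
proof -
  define f :: "'a \<Rightarrow> int" where "f = (\<lambda>v. if v \<in> I then 1 else -1)"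
  have nb: "sum f (nbhd V E v) \<le> 0" if v: "v \<in> V" for v
  proof -
    let ?N = "nbhd V E v"
    have le1: "card (?N \<inter> I) \<le> 1"
    proof -
      have "\<forall>a\<in>?N \<inter> I. \<forall>b\<in>?N \<inter> I. a = b"
      proof (intro ballI)
        fix a b assume ab: "a \<in> ?N \<inter> I" "b \<in> ?N \<inter> I"
        show "a = b"
        proof (rule ccontr)
          assume "a \<noteq> b"
          then have "hadj a b" using ab unfolding hadj_def nbhd_def using Esym by blast
          then show False using Ii ab by blast
        qed
      qed
      then show ?thesis using card_le_Suc0_iff_eq[of "?N \<inter> I"] Nfin by simp
    qed
    have "sum f ?N = (\<Sum>x\<in>?N \<inter> I. 1) + (\<Sum>x\<in>?N - I. -1)"
      unfolding f_def using Nfin by (simp add: sum.If_cases Diff_eq)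
    also have "\<dots> = int (card (?N \<inter> I)) - int (card (?N - I))" by simp
    finally have eq: "sum f ?N = int (card (?N \<inter> I)) - int (card (?N - I))" .
    have "?N = (?N \<inter> I) \<union> (?N - I)" by blast
    then have "card ?N = card (?N \<inter> I) + card (?N - I)"
      using card_Un_disjoint[of "?N \<inter> I" "?N - I"] Nfin by (metis Diff_disjoint Int_Diff_disjoint finite_Diff finite_Int)
    then have "card (?N \<inter> I) + card (?N - I) = 3" using N3[OF v] by simp
    then show ?thesis using eq le1 by linarith
  qed
  have ist: "istdf V E f" unfolding istdf_def using nb by (simp add: f_def)
  have finI: "finite I" using IV finV finite_subset by blast
  have "sum f V = (\<Sum>x\<in>V \<inter> I. 1) + (\<Sum>x\<in>V - I. -1)"
    unfolding f_def using finV by (simp add: sum.If_cases Diff_eq)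
  also have "\<dots> = int (card I) - int (card (V - I))" using IV by (simp add: Int_absorb1)
  also have "\<dots> = 2 * int (card I) - int (card V)" using IV finI card_Diff_subset[OF finI IV] card_mono[OF finV IV] by simp
  finally have sf: "sum f V = 2 * int (card I) - int (card V)" .
  define S where "S = {sum f V | f. istdf V E f}"
  have fS: "finite S"
  proof -
    have "S \<subseteq> {- int (card V) .. int (card V)}"
    proof
      fix y assume "y \<in> S"
      then obtain g where g: "y = sum g V" "istdf V E g" unfolding S_def by blast
      have "\<bar>sum g V\<bar> \<le> (\<Sum>x\<in>V. \<bar>g x\<bar>)" by (rule sum_abs)
      also have "\<dots> = (\<Sum>x\<in>V. 1)" using g(2) unfolding istdf_def by (intro sum.cong) auto
      finally show "y \<in> {- int (card V) .. int (card V)}" using g(1) by auto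
    qed
    then show ?thesis using finite_subset by blast
  qed
  have "sum f V \<in> S" using ist S_def by blast
  then have "sum f V \<le> inv_signed_total_dom_num V E"
    unfolding inv_signed_total_dom_num_def S_def[symmetric] using fS by simp
  then have "real_of_int (2 * int (card I) - int (card V)) \<le> real_of_int (inv_signed_total_dom_num V E)"
    using sf by simp
  moreover have "real (card V) \<le> 6 * real (card I)" using Ic by simp
  ultimately show ?thesis by simp
qed


lemma handshake: "even (\<Sum>v\<in>V. card (nbhd V E v))"
proof -
  let ?S = "SIGMA v:V. nbhd V E v"
  have "card ?S = (\<Sum>v\<in>V. card (nbhd V E v))" using finV Nfin by simp
  moreover have "even (card ?S)"
  proof (rule even_invol[where f = "\<lambda>(a,b). (b,a)"])
    show "finite ?S" using finV Nfin by simp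
    show "\<forall>x\<in>?S. (case x of (a, b) \<Rightarrow> (b, a)) \<in> ?S \<and>
          (case (case x of (a, b) \<Rightarrow> (b, a)) of (a, b) \<Rightarrow> (b, a)) = x \<and> (case x of (a, b) \<Rightarrow> (b, a)) \<noteq> x"
    proof
      fix x assume x: "x \<in> ?S"
      then obtain a b where ab: "x = (a,b)" "a \<in> V" "b \<in> V" "E a b" by (auto simp: nbhd_def)
      have "E b a" using Esym[OF ab(4)] .
      moreover have "a \<noteq> b" using ab(4) Eirr by blast
      ultimately show "(case x of (a, b) \<Rightarrow> (b, a)) \<in> ?S \<and>
          (case (case x of (a, b) \<Rightarrow> (b, a)) of (a, b) \<Rightarrow> (b, a)) = x \<and> (case x of (a, b) \<Rightarrow> (b, a)) \<noteq> x"
        using ab by (simp add: nbhd_def)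
    qed
  qed
  ultimately show ?thesis by simp
qed

lemma conn_all: assumes "connected_graph V E" "s \<in> S" "\<forall>u\<in>S. \<forall>v. E u v \<longrightarrow> v \<in> S" "S \<subseteq> V"
  shows "V \<subseteq> S"
proof
  fix v assume v: "v \<in> V"
  have sV: "s \<in> V" using assms by blast
  have "(s,v) \<in> {(x,y). E x y}\<^sup>*" using assms(1) sV v unfolding connected_graph_def by blast
  then show "v \<in> S"
    by (induction rule: rtrancl_induct) (use assms(2,3) in auto)
qed

lemma fano_Lset: "i < 7 \<Longrightarrow> k < 7 \<Longrightarrow> (i \<in> Lset k \<longleftrightarrow> fano_inc i k)"
proof -
  assume "i < 7" "k < 7"
  then have "i = 0 \<or> i = 1 \<or> i = 2 \<or> i = 3 \<or> i = 4 \<or> i = 5 \<or> i = 6"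
    "k = 0 \<or> k = 1 \<or> k = 2 \<or> k = 3 \<or> k = 4 \<or> k = 5 \<or> k = 6" by auto
  then show ?thesis by (elim disjE) (simp_all add: Lset_def fano_inc_def)
qed

lemma heawood:
  assumes conn: "connected_graph V E"
  and CV: "C \<subseteq> V" and Cne: "C \<noteq> {}" and Ccl: "\<forall>u\<in>C. \<forall>v. hadj u v \<longrightarrow> v \<in> C" and Cc: "card C = 7"
  and C6: "\<forall>u\<in>C. card {v\<in>C. hadj u v} = 6"
  shows "iso_heawood V E"
proof -
  have finC: "finite C" using CV finV finite_subset by blast
  have D1: "{v\<in>C. hadj p v} = C - {p}" if p: "p \<in> C" for p
  proof -
    have sub: "{v\<in>C. hadj p v} \<subseteq> C - {p}" using hirr by blast
    have "card (C - {p}) = 6" using Cc p finC by simp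
    then show ?thesis using card_subset_eq[OF _ sub] C6 p finC by simp
  qed
  have hall: "hadj p q" if "p \<in> C" "q \<in> C" "p \<noteq> q" for p q
    using D1[OF that(1)] that by blast
  have hV: "{v\<in>V. hadj p v} = {v\<in>C. hadj p v}" if "p \<in> C" for p
    using Ccl that CV by blast
  have Un: "x = y" if pq: "p \<in> C" "q \<in> C" "p \<noteq> q" and e: "E p x" "E q x" "E p y" "E q y" for p q x y
  proof (rule ccontr)
    assume xy: "x \<noteq> y"
    have pV: "p \<in> V" using pq CV by blast
    have xV: "x \<in> V" "y \<in> V" using e Ein by auto
    have xy_in: "{x,y} \<subseteq> nbhd V E p" using e xV by (auto simp: nbhd_def)
    have "card (nbhd V E p - {x,y}) = 1" using N3[OF pV] xy_in xy Nfin by (simp add: card_Diff_subset)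
    then obtain w where w: "nbhd V E p - {x,y} = {w}" using card_1_singletonE by blast
    have Np: "nbhd V E p = {x,y,w}" using w xy_in by blast
    have wV: "w \<in> V" using w by (auto simp: nbhd_def)
    let ?A = "nbhd V E x - {p}" and ?B = "nbhd V E y - {p}" and ?W = "nbhd V E w - {p}"
    have "w \<in> nbhd V E p" using Np by simp
    then have Epw: "E p w" by (simp add: nbhd_def)
    have pN: "p \<in> nbhd V E x" "p \<in> nbhd V E y" "p \<in> nbhd V E w"
      using Esym[OF e(1)] Esym[OF e(3)] Esym[OF Epw] pV by (simp_all add: nbhd_def)
    have cA1: "card ?A = 2" using N3[OF xV(1)] pN(1) Nfin by simp
    have cA2: "card ?B = 2" using N3[OF xV(2)] pN(2) Nfin by simp
    have cA3: "card ?W = 2" using N3[OF wV] pN(3) Nfin by simp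
    note cA = cA1 cA2 cA3
    have qV: "q \<in> V" using pq CV by blast
    have qAB: "q \<in> ?A \<inter> ?B" using Esym[OF e(2)] Esym[OF e(4)] qV pq(3) by (auto simp: nbhd_def)
    have "card ?A + card ?B = card (?A \<union> ?B) + card (?A \<inter> ?B)" using Nfin by (intro card_Un_Int) auto
    moreover have "card (?A \<inter> ?B) \<ge> 1" using qAB Nfin by (metis One_nat_def card_0_eq empty_iff finite_Diff finite_Int less_one not_le)
    ultimately have cAB: "card (?A \<union> ?B) \<le> 3" using cA by linarith
    have sub: "{v\<in>V. hadj p v} \<subseteq> ?A \<union> ?B \<union> ?W"
    proof
      fix v assume "v \<in> {v\<in>V. hadj p v}"
      then obtain z where z: "E p z" "E z v" "p \<noteq> v" "v \<in> V" unfolding hadj_def by blast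
      then have "z \<in> nbhd V E p" using Ein by (auto simp: nbhd_def)
      then show "v \<in> ?A \<union> ?B \<union> ?W" using Np z by (auto simp: nbhd_def)
    qed
    have "card {v\<in>V. hadj p v} \<le> card (?A \<union> ?B \<union> ?W)" using sub Nfin by (intro card_mono) auto
    also have "\<dots> \<le> card (?A \<union> ?B) + card ?W" by (rule card_Un_le)
    finally have "card {v\<in>V. hadj p v} \<le> 5" using cAB cA by linarith
    then show False using hV[OF pq(1)] C6 pq(1) by simp
  qed
  define X where "X = {x\<in>V. \<exists>w\<in>C. E w x}"
  have Xn: "nbhd V E x \<subseteq> C" if x: "x \<in> X" for x
  proof
    fix z assume z: "z \<in> nbhd V E x"
    obtain w where w: "w \<in> C" "E w x" using x X_def by blast
    show "z \<in> C"
    proof (cases "z = w")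
      case True then show ?thesis using w by simp
    next
      case False
      then have "hadj w z" using w z CV unfolding hadj_def nbhd_def by auto
      then show ?thesis using Ccl w by blast
    qed
  qed
  have CX: "C \<inter> X = {}"
  proof (rule ccontr)
    assume "C \<inter> X \<noteq> {}"
    then obtain c w where c: "c \<in> C" "w \<in> C" "E w c" using X_def by blast
    define S where "S = {u\<in>C. \<exists>w\<in>C. E u w}"
    have Sn: "z \<in> S" if u: "u \<in> S" "E u z" for u z
    proof -
      obtain w where w: "u \<in> C" "w \<in> C" "E u w" using u S_def by blast
      have "z \<in> C"
      proof (cases "z = w")
        case True then show ?thesis using w by simp
      next
        case False
        then have "hadj w z" using w u CV Ein Esym unfolding hadj_def by blast
        then show ?thesis using Ccl w by blast
      qed
      then show ?thesis using S_def w Esym u(2) by blast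
    qed
    have "c \<in> S" using c Esym S_def by blast
    moreover have "S \<subseteq> V" using S_def CV by blast
    ultimately have "V \<subseteq> S" using conn_all[OF conn] Sn by blast
    then have VC: "V = C" using S_def CV by blast
    have "(\<Sum>v\<in>V. card (nbhd V E v)) = (\<Sum>v\<in>V. 3)" using N3 by simp
    also have "\<dots> = 21" using VC Cc by simp
    finally show False using handshake by simp
  qed
  have VCX: "V = C \<union> X"
  proof
    show "C \<union> X \<subseteq> V" using CV X_def by blast
    obtain c where c: "c \<in> C" using Cne by blast
    have cl: "\<forall>u\<in>C \<union> X. \<forall>v. E u v \<longrightarrow> v \<in> C \<union> X"
    proof (intro ballI allI impI)
      fix u v assume u: "u \<in> C \<union> X" and e: "E u v"
      show "v \<in> C \<union> X"
      proof (cases "u \<in> C")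
        case True then show ?thesis using e Ein X_def by blast
      next
        case False
        then have "u \<in> X" using u by blast
        then show ?thesis using Xn e Ein by (auto simp: nbhd_def)
      qed
    qed
    show "V \<subseteq> C \<union> X" using conn_all[OF conn, of c "C \<union> X"] c cl CV X_def by blast
  qed
  interpret fa: fano C X E
  proof
    show "card C = 7" by (rule Cc)
    show "card {p\<in>C. E p l} = 3" if l: "l \<in> X" for l
    proof -
      have "{p\<in>C. E p l} = nbhd V E l"
      proof
        show "{p\<in>C. E p l} \<subseteq> nbhd V E l"
        proof
          fix p assume "p \<in> {p\<in>C. E p l}"
          then have "p \<in> C" "E p l" by auto
          then show "p \<in> nbhd V E l" using Esym[of p l] CV by (auto simp: nbhd_def)
        qed
        show "nbhd V E l \<subseteq> {p\<in>C. E p l}"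
        proof
          fix p assume p: "p \<in> nbhd V E l"
          then have "E l p" by (simp add: nbhd_def)
          then show "p \<in> {p\<in>C. E p l}" using Esym[of l p] Xn[OF l] p by blast
        qed
      qed
      then show ?thesis using N3 l X_def by simp
    qed
    show "card {l\<in>X. E p l} = 3" if p: "p \<in> C" for p
    proof -
      have "{l\<in>X. E p l} = nbhd V E p" using p X_def Ein by (auto simp: nbhd_def)
      then show ?thesis using N3 p CV by auto
    qed
    show "\<exists>l\<in>X. E p l \<and> E q l" if pq: "p \<in> C" "q \<in> C" "p \<noteq> q" for p q
    proof -
      obtain x where "E p x" "E x q" using hall[OF pq] unfolding hadj_def by blast
      then show ?thesis using pq X_def Ein Esym by blast
    qed
    show "l = l'" if "p \<in> C" "q \<in> C" "p \<noteq> q" "l \<in> X" "l' \<in> X" "E p l" "E q l" "E p l'" "E q l'" for p q l l'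
      using Un that by blast
  qed
  obtain ps ls where st: "length ps = 7" "length ls = 7" "distinct ps" "distinct ls" "set ps = C" "set ls = X"
    "\<forall>k<7. fa.pts (ls ! k) = (\<lambda>i. ps ! i) ` Lset k" using fa.fano_structure by blast
  define gs where "gs = ps @ ls"
  have lg: "length gs = 14" using st gs_def by simp
  have dg: "distinct gs" using st(3,4,5,6) CX unfolding gs_def by simp
  have sg': "set gs = V" using st VCX gs_def by auto
  have bij: "bij_betw ((!) gs) {..<14} V" using bij_betw_nth[OF dg _ sg'[symmetric]] lg by simp
  define h where "h = inv_into {..<14} ((!) gs)"
  have bh: "bij_betw h V {0..<14}" using bij_betw_inv_into[OF bij] h_def by (simp add: lessThan_atLeast0)
  have ghu: "gs ! (h u) = u \<and> h u < 14" if u: "u \<in> V" for u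
  proof -
    have m: "u \<in> (!) gs ` {..<14}" using bij u bij_betw_imp_surj_on by blast
    have "gs ! (inv_into {..<14} ((!) gs) u) = u" by (rule f_inv_into_f[OF m])
    moreover have "inv_into {..<14} ((!) gs) u \<in> {..<14}" by (rule inv_into_into[OF m])
    ultimately show ?thesis unfolding h_def by simp
  qed
  have gp: "gs ! i = ps ! i" if "i < 7" for i using that st(1) gs_def by (simp add: nth_append)
  have gl: "gs ! i = ls ! (i - 7)" if "7 \<le> i" for i using that st(1) gs_def by (simp add: nth_append)
  have injps: "inj_on ((!) ps) {..<7}" using st(1,3) by (simp add: inj_on_nth)
  have pinC: "ps ! i \<in> C" if "i < 7" for i
  proof -
    have "ps ! i \<in> set ps" using that st(1) by simp
    then show ?thesis using st(5) by simp
  qed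
  have linX: "ls ! i \<in> X" if "i < 7" for i
  proof -
    have "ls ! i \<in> set ls" using that st(2) by simp
    then show ?thesis using st(6) by simp
  qed
  have Lsub: "Lset k \<subseteq> {..<7}" if "k < 7" for k using that by (auto simp: Lset_def)
  have mem: "E (ps ! i) (ls ! k) \<longleftrightarrow> fano_inc i k" if ik: "i < 7" "k < 7" for i k
  proof -
    have "E (ps ! i) (ls ! k) \<longleftrightarrow> ps ! i \<in> fa.pts (ls ! k)" using pinC[OF ik(1)] by (simp add: fa.pts_def)
    also have "\<dots> \<longleftrightarrow> ps ! i \<in> (\<lambda>i. ps ! i) ` Lset k" using st(7) ik(2) by simp
    also have "\<dots> \<longleftrightarrow> i \<in> Lset k" using inj_on_image_mem_iff[OF injps _ Lsub[OF ik(2)], of i] ik(1) by simp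
    also have "\<dots> \<longleftrightarrow> fano_inc i k" using fano_Lset ik by simp
    finally show ?thesis .
  qed
  have noCC: "\<not> E a b" if "a \<in> C" "b \<in> C" for a b
  proof
    assume "E a b"
    then have "b \<in> X" unfolding X_def using that Ein by blast
    then show False using that CX by blast
  qed
  have noXX: "\<not> E a b" if "a \<in> X" "b \<in> X" for a b
  proof
    assume "E a b"
    then have "b \<in> nbhd V E a" using Ein by (simp add: nbhd_def)
    then have "b \<in> C" using Xn[OF that(1)] by blast
    then show False using that CX by blast
  qed
  have key: "E (gs ! i) (gs ! j) \<longleftrightarrow> heawood_adj i j" if ij: "i < 14" "j < 14" for i j
  proof (cases "i < 7")
    case iT: True
    show ?thesis
    proof (cases "j < 7")
      case jT: True
      have "\<not> E (gs ! i) (gs ! j)" using noCC pinC iT jT gp by simp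
      then show ?thesis using iT jT by (simp add: heawood_adj_def)
    next
      case jF: False
      have "E (gs ! i) (gs ! j) \<longleftrightarrow> E (ps ! i) (ls ! (j - 7))" using gp[OF iT] gl jF by simp
      also have "\<dots> \<longleftrightarrow> fano_inc i (j - 7)" using mem iT jF ij by simp
      finally show ?thesis using iT jF ij by (auto simp: heawood_adj_def)
    qed
  next
    case iF: False
    show ?thesis
    proof (cases "j < 7")
      case jT: True
      have "E (gs ! i) (gs ! j) \<longleftrightarrow> E (gs ! j) (gs ! i)" using Esym by blast
      also have "\<dots> \<longleftrightarrow> E (ps ! j) (ls ! (i - 7))" using gp[OF jT] gl iF by simp
      also have "\<dots> \<longleftrightarrow> fano_inc j (i - 7)" using mem jT iF ij by simp
      finally show ?thesis using jT iF ij by (auto simp: heawood_adj_def)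
    next
      case jF: False
      have "\<not> E (gs ! i) (gs ! j)" using noXX linX iF jF ij gl by simp
      then show ?thesis using iF jF by (simp add: heawood_adj_def)
    qed
  qed
  show ?thesis unfolding iso_heawood_def
  proof (intro exI conjI)
    show "bij_betw h V {0..<14}" by (rule bh)
    show "\<forall>u\<in>V. \<forall>v\<in>V. E u v = heawood_adj (h u) (h v)"
    proof (intro ballI)
      fix u v assume "u \<in> V" "v \<in> V"
      then have "gs ! (h u) = u" "h u < 14" "gs ! (h v) = v" "h v < 14" using ghu by auto
      then show "E u v = heawood_adj (h u) (h v)" using key[of "h u" "h v"] by simp
    qed
  qed
qed

end


theorem mainTheorem9:
  fixes V :: "'a set" and E :: "'a \<Rightarrow> 'a \<Rightarrow> bool"
  assumes "simple_graph V E"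
    and "connected_graph V E"
    and "cubic V E"
    and "\<not> iso_heawood V E"
  shows "real_of_int (inv_signed_total_dom_num V E) \<ge> - (2 * real (card V) / 3)"
proof -
  have nh: "False" if c1: "C \<subseteq> V" and c2: "C \<noteq> {}" and c3: "\<forall>u\<in>C. \<forall>v. hadj V E u v \<longrightarrow> v \<in> C"
    and c4: "card C = 7" and c5: "\<forall>u\<in>C. card {v\<in>C. hadj V E u v} = 6" for C
  proof -
    have "iso_heawood V E" by (rule heawood[OF assms(1) assms(3) assms(2) c1 c2 c3 c4 c5])
    then show False using assms(4) by simp
  qed
  have cl: "\<forall>u\<in>V. \<forall>v. hadj V E u v \<longrightarrow> v \<in> V" using hadjV[OF assms(1) assms(3)] by blast
  have "\<exists>I \<subseteq> V. (\<forall>a\<in>I. \<forall>b\<in>I. \<not> hadj V E a b) \<and> card V \<le> 6 * card I"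
    by (rule comp_indep[OF assms(1) assms(3) nh]) (simp_all add: cl)
  then obtain I where I: "I \<subseteq> V" "\<forall>a\<in>I. \<forall>b\<in>I. \<not> hadj V E a b" "card V \<le> 6 * card I"
    by blast
  show ?thesis by (rule istdf_from[OF assms(1) assms(3) I(1) I(2) I(3)])
qed

end
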